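(* Let $M$ be a locally-finite map in the hyperbolic plane with exactly one end such that $V(M)$ is a locally finite collection of vertices, and suppose a group $G\le\mathrm{Isom}(\mathbb{H}^2)$ acts quasi-transitively on $M$. Then $G$ is finitely generated.
   Context: A map $M$ in a surface $X$ is a (simple, connected, infinite) graph embedded in $X$: vertices are distinct points, edges are curves meeting only at common endpoints, and each face is homeomorphic to an open disc. Locally-finite and number of ends refer to the underlying graph. $V(M)$ is a locally finite collection of vertices if every compact subset contains only finitely many vertices of $M$. $G$ acts on $M$ if each $g\in G$ maps $M$ to itself with $g(V(M))=V(M)$ inducing a graph automorphism; quasi-transitively means finitely many orbits on $V(M)$. *)

theory Defs
  imports "HOL-Analysis.Analysis"
begin

definition hdisc :: "complex set" where
  "hdisc = ball 0 1"

definition hdist :: "complex \<Rightarrow> complex \<Rightarrow> real" where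
  "hdist x y = arcosh (1 + 2 * (cmod (x - y))^2 / ((1 - (cmod x)^2) * (1 - (cmod y)^2)))"

text \<open>Isometries of the hyperbolic plane; normalised to be the identity off the disc,
  so that they form a group under composition.\<close>
definition hyp_isom :: "(complex \<Rightarrow> complex) \<Rightarrow> bool" where
  "hyp_isom f \<longleftrightarrow> bij_betw f hdisc hdisc
     \<and> (\<forall>x\<in>hdisc. \<forall>y\<in>hdisc. hdist (f x) (f y) = hdist x y)
     \<and> (\<forall>x. x \<notin> hdisc \<longrightarrow> f x = x)"

definition isom_inv :: "(complex \<Rightarrow> complex) \<Rightarrow> complex \<Rightarrow> complex" where
  "isom_inv f = (\<lambda>x. if x \<in> hdisc then inv_into hdisc f x else x)"

definition isom_subgroup :: "(complex \<Rightarrow> complex) set \<Rightarrow> bool" where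
  "isom_subgroup G \<longleftrightarrow> (\<forall>g\<in>G. hyp_isom g) \<and> id \<in> G
     \<and> (\<forall>g\<in>G. \<forall>h\<in>G. g \<circ> h \<in> G) \<and> (\<forall>g\<in>G. isom_inv g \<in> G)"

inductive_set isom_generated :: "(complex \<Rightarrow> complex) set \<Rightarrow> (complex \<Rightarrow> complex) set"
  for S where
  gen_id: "id \<in> isom_generated S"
| gen_mult: "s \<in> S \<Longrightarrow> g \<in> isom_generated S \<Longrightarrow> s \<circ> g \<in> isom_generated S"
| gen_inv: "s \<in> S \<Longrightarrow> g \<in> isom_generated S \<Longrightarrow> isom_inv s \<circ> g \<in> isom_generated S"

definition finitely_generated :: "(complex \<Rightarrow> complex) set \<Rightarrow> bool" where
  "finitely_generated G \<longleftrightarrow> (\<exists>S. finite S \<and> S \<subseteq> G \<and> isom_generated S = G)"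

definition simple_graph :: "'a set \<Rightarrow> ('a \<Rightarrow> 'a \<Rightarrow> bool) \<Rightarrow> bool" where
  "simple_graph V E \<longleftrightarrow> (\<forall>u v. E u v \<longrightarrow> u \<in> V \<and> v \<in> V \<and> u \<noteq> v \<and> E v u)"

definition conn_in :: "'a set \<Rightarrow> ('a \<Rightarrow> 'a \<Rightarrow> bool) \<Rightarrow> 'a \<Rightarrow> 'a \<Rightarrow> bool" where
  "conn_in W E u v \<longleftrightarrow> (\<exists>p::'a list. p \<noteq> [] \<and> hd p = u \<and> last p = v \<and> set p \<subseteq> W
      \<and> (\<forall>i. Suc i < length p \<longrightarrow> E (p ! i) (p ! Suc i)))"

definition graph_connected :: "'a set \<Rightarrow> ('a \<Rightarrow> 'a \<Rightarrow> bool) \<Rightarrow> bool" where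
  "graph_connected V E \<longleftrightarrow> (\<forall>u\<in>V. \<forall>v\<in>V. conn_in V E u v)"

definition locally_finite_graph :: "'a set \<Rightarrow> ('a \<Rightarrow> 'a \<Rightarrow> bool) \<Rightarrow> bool" where
  "locally_finite_graph V E \<longleftrightarrow> (\<forall>v\<in>V. finite {u. E v u})"

definition is_ray :: "'a set \<Rightarrow> ('a \<Rightarrow> 'a \<Rightarrow> bool) \<Rightarrow> (nat \<Rightarrow> 'a) \<Rightarrow> bool" where
  "is_ray V E r \<longleftrightarrow> inj r \<and> range r \<subseteq> V \<and> (\<forall>n. E (r n) (r (Suc n)))"

definition ray_equiv :: "'a set \<Rightarrow> ('a \<Rightarrow> 'a \<Rightarrow> bool) \<Rightarrow> (nat \<Rightarrow> 'a) \<Rightarrow> (nat \<Rightarrow> 'a) \<Rightarrow> bool" where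
  "ray_equiv V E r s \<longleftrightarrow> (\<forall>F. finite F \<longrightarrow>
     (\<exists>m n. (\<forall>i\<ge>m. r i \<notin> F) \<and> (\<forall>j\<ge>n. s j \<notin> F) \<and> conn_in (V - F) E (r m) (s n)))"

definition one_ended :: "'a set \<Rightarrow> ('a \<Rightarrow> 'a \<Rightarrow> bool) \<Rightarrow> bool" where
  "one_ended V E \<longleftrightarrow> (\<exists>r. is_ray V E r) \<and>
     (\<forall>r s. is_ray V E r \<longrightarrow> is_ray V E s \<longrightarrow> ray_equiv V E r s)"

definition edge_set :: "complex set \<Rightarrow> (complex \<Rightarrow> complex \<Rightarrow> bool)
    \<Rightarrow> (complex \<Rightarrow> complex \<Rightarrow> real \<Rightarrow> complex) \<Rightarrow> complex set" where
  "edge_set V E c = (\<Union>{path_image (c u v) | u v. E u v})"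

definition is_hyp_map :: "complex set \<Rightarrow> (complex \<Rightarrow> complex \<Rightarrow> bool)
    \<Rightarrow> (complex \<Rightarrow> complex \<Rightarrow> real \<Rightarrow> complex) \<Rightarrow> bool" where
  "is_hyp_map V E c \<longleftrightarrow>
     simple_graph V E \<and> graph_connected V E \<and> infinite V \<and> V \<subseteq> hdisc
   \<and> (\<forall>u v. E u v \<longrightarrow> arc (c u v) \<and> pathstart (c u v) = u \<and> pathfinish (c u v) = v
          \<and> c v u = reversepath (c u v) \<and> path_image (c u v) \<subseteq> hdisc
          \<and> path_image (c u v) \<inter> V = {u, v})
   \<and> (\<forall>u v u' v'. E u v \<longrightarrow> E u' v' \<longrightarrow> {u, v} \<noteq> {u', v'} \<longrightarrow>
          path_image (c u v) \<inter> path_image (c u' v') \<subseteq> {u, v} \<inter> {u', v'})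
   \<and> (\<forall>F \<in> components (hdisc - (V \<union> edge_set V E c)). F homeomorphic ball (0::complex) 1)"

definition locally_finite_vertices :: "complex set \<Rightarrow> bool" where
  "locally_finite_vertices V \<longleftrightarrow> (\<forall>K. compact K \<and> K \<subseteq> hdisc \<longrightarrow> finite (V \<inter> K))"

definition acts_on_map :: "(complex \<Rightarrow> complex) set \<Rightarrow> complex set \<Rightarrow> (complex \<Rightarrow> complex \<Rightarrow> bool)
    \<Rightarrow> (complex \<Rightarrow> complex \<Rightarrow> real \<Rightarrow> complex) \<Rightarrow> bool" where
  "acts_on_map G V E c \<longleftrightarrow> (\<forall>g\<in>G. g ` V = V
     \<and> g ` (V \<union> edge_set V E c) = V \<union> edge_set V E c
     \<and> (\<forall>u\<in>V. \<forall>v\<in>V. E u v \<longleftrightarrow> E (g u) (g v))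
     \<and> (\<forall>u v. E u v \<longrightarrow> g ` path_image (c u v) = path_image (c (g u) (g v))))"

definition quasi_transitive :: "(complex \<Rightarrow> complex) set \<Rightarrow> complex set \<Rightarrow> bool" where
  "quasi_transitive G V \<longleftrightarrow> finite ((\<lambda>v. (\<lambda>g. g v) ` G) ` V)"

end

theory Submission
  imports Defs
begin

definition dl :: "complex \<Rightarrow> complex \<Rightarrow> real" where
  "dl x y = (cmod (x-y))^2 / ((1 - (cmod x)^2) * (1 - (cmod y)^2))"

definition mob :: "complex \<Rightarrow> complex \<Rightarrow> complex" where
  "mob a z = (z - a) / (1 - cnj a * z)"

lemma hdisc_iff: "z \<in> hdisc \<longleftrightarrow> cmod z < 1"
  by (simp add: hdisc_def)

lemma den_nz: assumes "cmod a < 1" "cmod z < 1" shows "1 - cnj a * z \<noteq> 0"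
proof
  assume "1 - cnj a * z = 0"
  then have "cnj a * z = 1" by simp
  then have "cmod a * cmod z = 1" by (metis complex_mod_cnj norm_mult norm_one)
  moreover have "cmod a * cmod z < 1" using assms
    by (metis mult_strict_mono' norm_ge_zero mult_1_left)
  ultimately show False by simp
qed

lemma sq_of_real: "complex_of_real ((cmod z)^2) = z * cnj z"
  by (rule complex_norm_square)

lemma mob_norm_id:
  assumes "cmod a < 1" "cmod z < 1"
  shows "(1 - (cmod (mob a z))^2) * (cmod (1 - cnj a * z))^2 = (1 - (cmod a)^2) * (1 - (cmod z)^2)"
proof -
  let ?D = "1 - cnj a * z"
  have D: "?D \<noteq> 0" using den_nz assms by blast
  have "complex_of_real ((1 - (cmod (mob a z))^2) * (cmod ?D)^2) = (1 - mob a z * cnj (mob a z)) * (?D * cnj ?D)"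
    by (simp only: of_real_mult of_real_diff of_real_1 sq_of_real)
  also have "\<dots> = ?D * cnj ?D - (mob a z * ?D) * cnj (mob a z * ?D)"
    by (simp add: algebra_simps)
  also have "mob a z * ?D = z - a" using D by (simp add: mob_def)
  also have "?D * cnj ?D - (z - a) * cnj (z - a) = (1 - a * cnj a) * (1 - z * cnj z)"
    by (simp add: algebra_simps)
  finally have "complex_of_real ((1 - (cmod (mob a z))^2) * (cmod ?D)^2) = (1 - a * cnj a) * (1 - z * cnj z)" .
  also have "(1 - a * cnj a) * (1 - z * cnj z) = complex_of_real ((1 - (cmod a)^2) * (1 - (cmod z)^2))"
    by (simp only: of_real_mult of_real_diff of_real_1 sq_of_real)
  finally show ?thesis using of_real_eq_iff by blast
qed

lemma mob_disc: assumes "cmod a < 1" "cmod z < 1" shows "cmod (mob a z) < 1"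
proof -
  have D: "cmod (1 - cnj a * z) > 0" using den_nz assms by simp
  have "(1 - (cmod a)^2) * (1 - (cmod z)^2) > 0" using assms
    by (simp add: abs_square_less_1)
  then have "(1 - (cmod (mob a z))^2) * (cmod (1 - cnj a * z))^2 > 0" using mob_norm_id[OF assms] by simp
  then have "(1 - (cmod (mob a z))^2) > 0" using D
    by (simp add: zero_less_mult_iff)
  then show ?thesis by (simp add: abs_square_less_1)
qed

lemma mob_diff:
  assumes "cmod a < 1" "cmod x < 1" "cmod y < 1"
  shows "mob a x - mob a y = (x - y) * (1 - a * cnj a) / ((1 - cnj a * x) * (1 - cnj a * y))"
proof -
  have "1 - cnj a * x \<noteq> 0" "1 - cnj a * y \<noteq> 0" using den_nz assms by auto
  then show ?thesis by (simp add: mob_def field_simps)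
qed

lemma mob_dl:
  assumes "cmod a < 1" "cmod x < 1" "cmod y < 1"
  shows "dl (mob a x) (mob a y) = dl x y"
proof -
  let ?Dx = "cmod (1 - cnj a * x)" and ?Dy = "cmod (1 - cnj a * y)"
  have Dx: "?Dx > 0" "?Dy > 0" using den_nz assms by auto
  have na: "cmod (1 - a * cnj a) = 1 - (cmod a)^2"
  proof -
    have e: "1 - a * cnj a = complex_of_real (1 - (cmod a)^2)" by (simp only: of_real_diff of_real_1 sq_of_real)
    have "1 - (cmod a)^2 \<ge> 0" using assms(1) by (simp add: abs_square_le_1 less_imp_le)
    then show ?thesis unfolding e norm_of_real by simp
  qed
  have a: "1 - (cmod a)^2 > 0" using assms(1) by (simp add: abs_square_less_1)
  have nd: "cmod (mob a x - mob a y) = cmod (x - y) * (1 - (cmod a)^2) / (?Dx * ?Dy)"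
    using mob_diff[OF assms] by (simp add: norm_mult norm_divide na)
  have ex: "1 - (cmod (mob a x))^2 = (1 - (cmod a)^2) * (1 - (cmod x)^2) / ?Dx^2"
    using mob_norm_id[OF assms(1,2)] Dx by (simp add: field_simps)
  have ey: "1 - (cmod (mob a y))^2 = (1 - (cmod a)^2) * (1 - (cmod y)^2) / ?Dy^2"
    using mob_norm_id[OF assms(1,3)] Dx by (simp add: field_simps)
  have X: "1 - (cmod x)^2 > 0" "1 - (cmod y)^2 > 0" using assms by (simp_all add: abs_square_less_1)
  have gen: "(N*A/(P*Q))^2 / ((A*X/P^2)*(A*Y/Q^2)) = N^2/(X*Y)"
    if "A > 0" "P > 0" "Q > 0" for N A X Y P Q :: real
    using that by (simp add: field_simps power2_eq_square)
  show ?thesis unfolding dl_def nd ex ey using gen[OF a Dx] by simp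
qed

lemma mob_inv: assumes "cmod a < 1" "cmod z < 1" shows "mob (-a) (mob a z) = z"
proof -
  have D: "1 - cnj a * z \<noteq> 0" using den_nz assms by blast
  have a: "1 - a * cnj a \<noteq> 0"
  proof -
    have "1 - a * cnj a = complex_of_real (1 - (cmod a)^2)" by (simp only: of_real_diff of_real_1 sq_of_real)
    moreover have "1 - (cmod a)^2 > 0" using assms(1) by (simp add: abs_square_less_1)
    ultimately show ?thesis by (metis of_real_eq_0_iff less_irrefl)
  qed
  have g: "(x/D + a)/(1 + c*(x/D)) = (x + a*D)/(D + c*x)" if "D \<noteq> 0" for x D c :: complex
  proof -
    have "x/D + a = (x + a*D)/D" "1 + c*(x/D) = (D + c*x)/D" using that by (simp_all add: field_simps)
    then show ?thesis using that by simp
  qed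
  have "mob (-a) (mob a z) = ((z - a) + a * (1 - cnj a * z)) / ((1 - cnj a * z) + cnj a * (z - a))"
    unfolding mob_def using g[OF D] by simp
  also have "\<dots> = (z * (1 - a * cnj a)) / (1 - a * cnj a)"
    by (simp add: algebra_simps)
  also have "\<dots> = z" using a by simp
  finally show ?thesis .
qed

lemma mob_self: "mob a a = 0" by (simp add: mob_def)
lemma mob_zero: "mob (-a) 0 = a" by (simp add: mob_def)


lemma cmod_diff_sq: "(cmod (u - w))^2 = (cmod u)^2 + (cmod w)^2 - 2 * Re (u * cnj w)"
  unfolding cmod_power2 by (simp add: power2_eq_square algebra_simps)

lemma dl_nonneg: "cmod x < 1 \<Longrightarrow> cmod y < 1 \<Longrightarrow> dl x y \<ge> 0"
  unfolding dl_def by (simp add: abs_square_less_1 less_imp_le)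

lemma isom_disc: "hyp_isom g \<Longrightarrow> x \<in> hdisc \<Longrightarrow> g x \<in> hdisc"
  unfolding hyp_isom_def bij_betw_def by blast

lemma hdist_dl: "hdist x y = arcosh (1 + 2 * dl x y)"
  unfolding hdist_def dl_def by simp

lemma isom_dl: assumes "hyp_isom g" "x \<in> hdisc" "y \<in> hdisc"
  shows "dl (g x) (g y) = dl x y"
proof -
  have gx: "g x \<in> hdisc" "g y \<in> hdisc" using isom_disc assms by auto
  have "hdist (g x) (g y) = hdist x y" using assms unfolding hyp_isom_def by blast
  then have "arcosh (1 + 2 * dl (g x) (g y)) = arcosh (1 + 2 * dl x y)" by (simp add: hdist_dl)
  then have "cosh (arcosh (1 + 2 * dl (g x) (g y))) = cosh (arcosh (1 + 2 * dl x y))" by simp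
  moreover have "dl (g x) (g y) \<ge> 0" "dl x y \<ge> 0" using dl_nonneg gx assms by (auto simp: hdisc_iff)
  ultimately show ?thesis by simp
qed

lemma isom_inv_left: assumes "hyp_isom g" shows "isom_inv g \<circ> g = id"
proof
  fix x
  show "(isom_inv g \<circ> g) x = id x"
  proof (cases "x \<in> hdisc")
    case True
    then have "g x \<in> hdisc" using isom_disc assms by blast
    moreover have "inj_on g hdisc" using assms unfolding hyp_isom_def bij_betw_def by blast
    ultimately show ?thesis using True by (simp add: isom_inv_def)
  next
    case False
    then have "g x = x" using assms unfolding hyp_isom_def by blast
    then show ?thesis using False by (simp add: isom_inv_def)
  qed
qed

lemma isom_inv_right: assumes "hyp_isom g" shows "g \<circ> isom_inv g = id"
proof
  fix x
  show "(g \<circ> isom_inv g) x = id x"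
  proof (cases "x \<in> hdisc")
    case True
    moreover have "g ` hdisc = hdisc" using assms unfolding hyp_isom_def bij_betw_def by blast
    ultimately show ?thesis by (simp add: isom_inv_def f_inv_into_f)
  next
    case False
    then have "g x = x" using assms unfolding hyp_isom_def by blast
    then show ?thesis using False by (simp add: isom_inv_def)
  qed
qed

lemma isom_inv_app: "hyp_isom g \<Longrightarrow> isom_inv g (g x) = x"
  using isom_inv_left by (metis comp_apply id_apply)

lemma isom_app_inv: "hyp_isom g \<Longrightarrow> g (isom_inv g x) = x"
  using isom_inv_right by (metis comp_apply id_apply)

locale kmap =
  fixes k :: "complex \<Rightarrow> complex"
  assumes kd: "\<And>x. cmod x < 1 \<Longrightarrow> cmod (k x) < 1"
    and kdl: "\<And>x y. cmod x < 1 \<Longrightarrow> cmod y < 1 \<Longrightarrow> dl (k x) (k y) = dl x y"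
    and k0: "k 0 = 0"
begin

lemma knorm: assumes "cmod x < 1" shows "cmod (k x) = cmod x"
proof -
  have "dl (k 0) (k x) = dl 0 x" using kdl assms by simp
  then have e: "(cmod (k x))^2 / (1 - (cmod (k x))^2) = (cmod x)^2 / (1 - (cmod x)^2)"
    by (simp add: dl_def k0)
  have p: "1 - (cmod (k x))^2 > 0" "1 - (cmod x)^2 > 0" using kd assms by (simp_all add: abs_square_less_1)
  then have "(cmod (k x))^2 * (1 - (cmod x)^2) = (cmod x)^2 * (1 - (cmod (k x))^2)"
    using e by (simp add: field_simps)
  then have "(cmod (k x))^2 = (cmod x)^2" by (simp add: algebra_simps)
  then show ?thesis by (simp add: power2_eq_iff_nonneg)
qed

lemma kinner: assumes "cmod x < 1" "cmod y < 1" shows "Re (k x * cnj (k y)) = Re (x * cnj y)"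
proof -
  have e: "dl (k x) (k y) = dl x y" using kdl assms by simp
  have p: "(1 - (cmod x)^2) * (1 - (cmod y)^2) > 0" using assms by (simp add: abs_square_less_1)
  have "(cmod (k x - k y))^2 = (cmod (x - y))^2"
    using e p unfolding dl_def knorm[OF assms(1)] knorm[OF assms(2)] by (simp add: field_simps)
  then show ?thesis unfolding cmod_diff_sq knorm[OF assms(1)] knorm[OF assms(2)] by simp
qed

lemma krefl: assumes "cmod x < 1" "cmod b < 1" "b \<noteq> 0" "k b = b"
  shows "k x = x \<or> k x = b * cnj x / cnj b"
proof -
  define X where "X = x * cnj b"
  define Y where "Y = k x * cnj b"
  have re: "Re Y = Re X" using kinner[OF assms(1,2)] assms(4) by (simp add: X_def Y_def)
  have nm: "cmod Y = cmod X" using knorm[OF assms(1)] by (simp add: X_def Y_def norm_mult)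
  then have "(Re Y)^2 + (Im Y)^2 = (Re X)^2 + (Im X)^2" by (metis cmod_power2)
  then have "(Im Y)^2 = (Im X)^2" using re by simp
  then have "Im Y = Im X \<or> Im Y = - Im X" by (simp add: power2_eq_iff)
  then have "Y = X \<or> Y = cnj X" using re by (auto intro: complex_eqI)
  moreover have "cnj b \<noteq> 0" using assms(3) by simp
  ultimately show ?thesis by (auto simp: X_def Y_def field_simps)
qed

lemma krigid: assumes "cmod x < 1" "cmod b < 1" "k b = b" "cmod c < 1" "k c = c"
   "Im (b * cnj c) \<noteq> 0"
  shows "k x = x"
proof -
  define z where "z = k x - x"
  have 1: "Re (z * cnj b) = 0" using kinner[OF assms(1,2)] assms(3) by (simp add: z_def algebra_simps)
  have 2: "Re (z * cnj c) = 0" using kinner[OF assms(1,4)] assms(5) by (simp add: z_def algebra_simps)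
  have d: "Im b * Re c - Re b * Im c \<noteq> 0" using assms(6) by simp
  have e1: "Re z * Re b + Im z * Im b = 0" "Re z * Re c + Im z * Im c = 0" using 1 2 by simp_all
  have "Re z * (Im b * Re c - Re b * Im c) = 0"
  proof -
    have "Re z * (Im b * Re c - Re b * Im c) = Im b * (Re z * Re c + Im z * Im c) - Im c * (Re z * Re b + Im z * Im b)"
      by (simp add: algebra_simps)
    then show ?thesis using e1 by simp
  qed
  then have r: "Re z = 0" using d by simp
  have "Im z * (Im b * Re c - Re b * Im c) = 0"
  proof -
    have "Im z * (Im b * Re c - Re b * Im c) = Re c * (Re z * Re b + Im z * Im b) - Re b * (Re z * Re c + Im z * Im c)"
      by (simp add: algebra_simps)
    then show ?thesis using e1 by simp
  qed
  then have "Im z = 0" using d by (metis mult_eq_0_iff)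
  then have "z = 0" using r by (simp add: complex_eqI)
  then show ?thesis by (simp add: z_def)
qed

end


lemma conj_kmap:
  assumes h: "hyp_isom h" and v: "v \<in> hdisc" and hv: "h v = v"
  shows "kmap (\<lambda>x. mob v (h (mob (-v) x)))"
proof
  have v1: "cmod v < 1" "cmod (-v) < 1" using v by (auto simp: hdisc_iff)
  show "cmod (mob v (h (mob (- v) x))) < 1" if "cmod x < 1" for x
  proof -
    have "mob (-v) x \<in> hdisc" using mob_disc[OF v1(2) that] by (simp add: hdisc_iff)
    then have "h (mob (-v) x) \<in> hdisc" using isom_disc h by blast
    then show ?thesis using mob_disc v1 by (simp add: hdisc_iff)
  qed
  show "dl (mob v (h (mob (- v) x))) (mob v (h (mob (- v) y))) = dl x y"
    if "cmod x < 1" "cmod y < 1" for x y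
  proof -
    have m: "mob (-v) x \<in> hdisc" "mob (-v) y \<in> hdisc" using mob_disc[OF v1(2)] that by (auto simp add: hdisc_iff)
    then have "h (mob (-v) x) \<in> hdisc" "h (mob (-v) y) \<in> hdisc" using isom_disc h by blast+
    then have "dl (mob v (h (mob (- v) x))) (mob v (h (mob (- v) y))) = dl (h (mob (- v) x)) (h (mob (- v) y))"
      using mob_dl v1 by (simp add: hdisc_iff)
    also have "\<dots> = dl (mob (- v) x) (mob (- v) y)" using isom_dl h m by blast
    also have "\<dots> = dl x y" using mob_dl v1 that by simp
    finally show ?thesis .
  qed
  show "mob v (h (mob (- v) 0)) = 0" using hv by (simp add: mob_self mob_zero del: minus_equation_iff)
qed

lemma stab:
  assumes h: "hyp_isom h" and v: "v \<in> hdisc" and a: "a \<in> hdisc" "a \<noteq> v"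
    and hv: "h v = v" and ha: "h a = a"
  shows "h (mob (-v) (\<i> * mob v a / 2)) = mob (-v) (\<i> * mob v a / 2)
       \<or> h (mob (-v) (\<i> * mob v a / 2)) = mob (-v) (- (\<i> * mob v a / 2))"
    and "h (mob (-v) (\<i> * mob v a / 2)) = mob (-v) (\<i> * mob v a / 2) \<Longrightarrow> h = id"
proof -
  define k where "k = (\<lambda>x. mob v (h (mob (-v) x)))"
  interpret kmap k unfolding k_def by (rule conj_kmap[OF h v hv])
  have v1: "cmod v < 1" "cmod (-v) < 1" using v by (auto simp: hdisc_iff)
  have a1: "cmod a < 1" using a by (simp add: hdisc_iff)
  define aa where "aa = mob v a"
  define pp where "pp = \<i> * aa / 2"
  have aa1: "cmod aa < 1" using mob_disc v1 a1 by (simp add: aa_def)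
  have aa0: "aa \<noteq> 0"
  proof
    assume "aa = 0"
    then have "mob (-v) (mob v a) = mob (-v) 0" by (simp add: aa_def)
    then show False using mob_inv[OF v1(1) a1] a(2) by (simp add: mob_zero)
  qed
  have pp1: "cmod pp < 1" using aa1 by (simp add: pp_def norm_mult norm_divide)
  have ka: "k aa = aa" unfolding k_def aa_def using mob_inv[OF v1(1) a1] ha by simp
  have hback: "h x = mob (-v) (k (mob v x))" if "x \<in> hdisc" for x
  proof -
    have "h x \<in> hdisc" using isom_disc h that by blast
    then show ?thesis unfolding k_def using mob_inv v1 that by (simp add: hdisc_iff)
  qed
  have fwd: "mob v (mob (-v) z) = z" if "cmod z < 1" for z using mob_inv[OF v1(2) that] by simp
  have pd: "mob (-v) pp \<in> hdisc" using mob_disc[OF v1(2) pp1] by (simp add: hdisc_iff)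
  have kp: "k pp = mob v (h (mob (-v) pp))" by (simp add: k_def)
  have "k pp = pp \<or> k pp = aa * cnj pp / cnj aa" using krefl[OF pp1 aa1 aa0 ka] .
  moreover have "aa * cnj pp / cnj aa = - pp" using aa0 by (simp add: pp_def field_simps)
  ultimately have kp2: "k pp = pp \<or> k pp = - pp" by simp
  have hp: "h (mob (-v) pp) = mob (-v) (k pp)" using hback[OF pd] fwd[OF pp1] by simp
  show "h (mob (-v) (\<i> * mob v a / 2)) = mob (-v) (\<i> * mob v a / 2)
       \<or> h (mob (-v) (\<i> * mob v a / 2)) = mob (-v) (- (\<i> * mob v a / 2))"
    using hp kp2 unfolding pp_def aa_def by metis
  assume hpp: "h (mob (-v) (\<i> * mob v a / 2)) = mob (-v) (\<i> * mob v a / 2)"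
  then have kpp: "k pp = pp" using kp fwd[OF pp1] by (simp add: pp_def aa_def)
  have im: "Im (aa * cnj pp) \<noteq> 0"
  proof -
    have "aa * cnj pp = - \<i> * complex_of_real ((cmod aa)^2) / 2"
      by (simp only: sq_of_real) (simp add: pp_def)
    then have "Im (aa * cnj pp) = - (((cmod aa)^2) / 2)" by simp
    then show ?thesis using aa0 by simp
  qed
  show "h = id"
  proof
    fix x
    show "h x = id x"
    proof (cases "x \<in> hdisc")
      case True
      have "cmod (mob v x) < 1" using mob_disc v1 True by (simp add: hdisc_iff)
      then have "k (mob v x) = mob v x" using krigid[OF _ aa1 ka pp1 kpp im] by blast
      then show ?thesis using hback[OF True] mob_inv v1 True by (simp add: hdisc_iff)
    next
      case False
      then show ?thesis using h unfolding hyp_isom_def by simp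
    qed
  qed
qed


lemma sub_isom: "isom_subgroup G \<Longrightarrow> g \<in> G \<Longrightarrow> hyp_isom g"
  unfolding isom_subgroup_def by blast

lemma sub_comp: "isom_subgroup G \<Longrightarrow> g \<in> G \<Longrightarrow> h \<in> G \<Longrightarrow> g \<circ> h \<in> G"
  unfolding isom_subgroup_def by blast

lemma sub_inv: "isom_subgroup G \<Longrightarrow> g \<in> G \<Longrightarrow> isom_inv g \<in> G"
  unfolding isom_subgroup_def by blast

lemma fib_finite:
  assumes G: "isom_subgroup G" and GV: "\<And>g. g \<in> G \<Longrightarrow> g ` V = V"
    and Vd: "V \<subseteq> hdisc" and inf: "infinite V" and lf: "locally_finite_vertices V"
    and v: "v \<in> V" and w: "w \<in> V"
  shows "finite {g \<in> G. g v = w}"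
proof -
  let ?F = "{g \<in> G. g v = w}"
  have "V - {v} \<noteq> {}" using inf by (metis Diff_empty finite.emptyI finite_Diff_insert)
  then obtain a where a: "a \<in> V" "a \<noteq> v" by blast
  have vd: "v \<in> hdisc" "a \<in> hdisc" "w \<in> hdisc" using Vd v a w by auto
  define D where "D = dl v a"
  define K where "K = {y. cmod y \<le> 1 \<and> (cmod (w - y))^2 \<le> D * ((1 - (cmod w)^2) * (1 - (cmod y)^2))}"
  have "closed K" unfolding K_def
    by (intro closed_Collect_conj closed_Collect_le continuous_intros)
  moreover have "bounded K" by (rule bounded_subset[OF bounded_cball[of 0 1]]) (auto simp: K_def)
  ultimately have cK: "compact K" by (simp add: compact_eq_bounded_closed)
  have Kd: "K \<subseteq> hdisc"
  proof
    fix y assume y: "y \<in> K"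
    show "y \<in> hdisc"
    proof (rule ccontr)
      assume "y \<notin> hdisc"
      then have "cmod y = 1" using y by (simp add: K_def hdisc_iff)
      then have "(cmod (w - y))^2 \<le> 0" using y by (simp add: K_def)
      then have "w = y" by simp
      then show False using vd \<open>cmod y = 1\<close> by (simp add: hdisc_iff)
    qed
  qed
  have finVK: "finite (V \<inter> K)" using lf cK Kd unfolding locally_finite_vertices_def by blast
  have ga: "g a \<in> V \<inter> K" if g: "g \<in> ?F" for g
  proof -
    have gi: "hyp_isom g" using g sub_isom G by blast
    have gaV: "g a \<in> V" using GV g a by blast
    then have gad: "g a \<in> hdisc" using Vd by blast
    have "dl w (g a) = D" using isom_dl[OF gi vd(1,2)] g by (simp add: D_def)
    moreover have "(1 - (cmod w)^2) * (1 - (cmod (g a))^2) > 0" using vd gad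
      by (simp add: hdisc_iff abs_square_less_1)
    ultimately have "(cmod (w - g a))^2 = D * ((1 - (cmod w)^2) * (1 - (cmod (g a))^2))"
      unfolding dl_def using divide_eq_eq by (metis less_irrefl)
    moreover have "cmod (g a) \<le> 1" using gad by (simp add: hdisc_iff)
    ultimately show ?thesis using gaV by (simp add: K_def)
  qed
  define p where "p = mob (-v) (\<i> * mob v a / 2)"
  define q where "q = mob (-v) (- (\<i> * mob v a / 2))"
  have key: "(g2 p = g1 p \<or> g2 p = g1 q) \<and> (g2 p = g1 p \<longrightarrow> g2 = g1)"
    if g1: "g1 \<in> ?F" and g2: "g2 \<in> ?F" and e: "g1 a = g2 a" for g1 g2
  proof -
    define h where "h = isom_inv g1 \<circ> g2"
    have i1: "hyp_isom g1" "hyp_isom g2" using g1 g2 G sub_isom by auto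
    have hG: "h \<in> G" unfolding h_def using g1 g2 by (intro sub_comp[OF G] sub_inv[OF G]) auto
    then have hi: "hyp_isom h" using G sub_isom by blast
    have hv: "h v = v" using g1 g2 isom_inv_app[OF i1(1), of v] by (simp add: h_def)
    have ha: "h a = a" using e[symmetric] isom_inv_app[OF i1(1), of a] by (simp add: h_def)
    have g2h: "g2 = g1 \<circ> h" unfolding h_def
      by (simp add: comp_assoc[symmetric] isom_inv_right[OF i1(1)])
    note s = stab[OF hi vd(1) vd(2) a(2) hv ha]
    have "h p = p \<or> h p = q" using s(1) by (simp add: p_def q_def)
    moreover have gp: "g2 p = g1 (h p)" by (subst g2h) simp
    ultimately have A: "g2 p = g1 p \<or> g2 p = g1 q" by auto
    have "g2 = g1" if "g2 p = g1 p"
    proof -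
      have "h p = p" using that isom_inv_app[OF i1(1), of p] by (simp add: h_def)
      then have "h = id" using s(2) by (simp add: p_def)
      then show ?thesis using g2h by (metis comp_id)
    qed
    then show ?thesis using A by blast
  qed
  define Phi where "Phi = (\<lambda>g::complex\<Rightarrow>complex. (g a, g p))"
  define ch where "ch = (\<lambda>c. SOME g. g \<in> ?F \<and> g a = c)"
  have inj: "inj_on Phi ?F"
  proof (rule inj_onI)
    fix g1 g2 assume "g1 \<in> ?F" "g2 \<in> ?F" "Phi g1 = Phi g2"
    then show "g1 = g2" using key[of g1 g2] by (simp add: Phi_def)
  qed
  have sub: "Phi ` ?F \<subseteq> (\<Union>c\<in>V \<inter> K. {(c, ch c p), (c, ch c q)})"
  proof
    fix z assume "z \<in> Phi ` ?F"
    then obtain g where g: "g \<in> ?F" and z: "z = Phi g" by blast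
    have ex: "\<exists>g'. g' \<in> ?F \<and> g' a = g a" using g by blast
    have c: "ch (g a) \<in> ?F \<and> ch (g a) a = g a" unfolding ch_def by (rule someI_ex[OF ex])
    then have "g p = ch (g a) p \<or> g p = ch (g a) q" using key[of "ch (g a)" g] g by blast
    then show "z \<in> (\<Union>c\<in>V \<inter> K. {(c, ch c p), (c, ch c q)})"
      using ga[OF g] z unfolding Phi_def by blast
  qed
  have "finite (\<Union>c\<in>V \<inter> K. {(c, ch c p), (c, ch c q)})" using finVK by (intro finite_UN_I) auto
  then have "finite (Phi ` ?F)" using sub finite_subset by blast
  then show ?thesis using inj finite_imageD by blast
qed


lemma gen_comp: "g \<in> isom_generated S \<Longrightarrow> k \<in> isom_generated S \<Longrightarrow> g \<circ> k \<in> isom_generated S"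
proof (induction g rule: isom_generated.induct)
  case gen_id then show ?case by simp
next
  case (gen_mult s g) then show ?case by (metis comp_assoc isom_generated.gen_mult)
next
  case (gen_inv s g) then show ?case by (metis comp_assoc isom_generated.gen_inv)
qed

lemma gen_S: "s \<in> S \<Longrightarrow> s \<in> isom_generated S"
  using isom_generated.gen_mult[OF _ isom_generated.gen_id] by fastforce

lemma gen_sub: assumes "isom_subgroup G" "S \<subseteq> G" shows "isom_generated S \<subseteq> G"
proof
  fix g assume "g \<in> isom_generated S"
  then show "g \<in> G"
  proof (induction g rule: isom_generated.induct)
    case gen_id then show ?case using assms unfolding isom_subgroup_def by blast
  next
    case (gen_mult s g) then show ?case using assms sub_comp by blast
  next
    case (gen_inv s g) then show ?case using assms sub_comp sub_inv by blast
  qed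
qed

inductive_set reach for E :: "'a \<Rightarrow> 'a \<Rightarrow> bool" and r0 :: 'a where
  r_base: "r0 \<in> reach E r0"
| r_step: "u \<in> reach E r0 \<Longrightarrow> E u u' \<Longrightarrow> u' \<in> reach E r0"

lemma walk_reach:
  "p \<noteq> [] \<Longrightarrow> hd p = r0 \<Longrightarrow> (\<forall>i. Suc i < length p \<longrightarrow> E (p!i) (p!Suc i)) \<Longrightarrow> last p \<in> reach E r0"
proof (induction p rule: rev_induct)
  case Nil then show ?case by simp
next
  case (snoc x xs)
  show ?case
  proof (cases "xs = []")
    case True then show ?thesis using snoc.prems by (simp add: reach.r_base)
  next
    case False
    have h: "hd xs = r0" using snoc.prems False by simp
    have adj: "\<forall>i. Suc i < length xs \<longrightarrow> E (xs!i) (xs!Suc i)"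
    proof (intro allI impI)
      fix i assume i: "Suc i < length xs"
      then have "E ((xs @ [x])!i) ((xs @ [x])!Suc i)" using snoc.prems(3) by simp
      then show "E (xs!i) (xs!Suc i)" using i by (simp add: nth_append)
    qed
    have l: "last xs \<in> reach E r0" using snoc.IH[OF False h adj] .
    have sl: "Suc (length xs - 1) = length xs" using False by simp
    have "Suc (length xs - 1) < length (xs @ [x])" using sl by simp
    then have "E ((xs @ [x])!(length xs - 1)) ((xs @ [x])!Suc (length xs - 1))"
      using snoc.prems(3) by blast
    moreover note sl
    ultimately have "E (last xs) x" using False by (simp add: nth_append last_conv_nth)
    then show ?thesis using l reach.r_step by simp
  qed
qed

theorem proposition4p2:
  fixes V :: "complex set" and E :: "complex \<Rightarrow> complex \<Rightarrow> bool"
    and c :: "complex \<Rightarrow> complex \<Rightarrow> real \<Rightarrow> complex"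
    and G :: "(complex \<Rightarrow> complex) set"
  assumes "is_hyp_map V E c"
    and "locally_finite_graph V E"
    and "one_ended V E"
    and "locally_finite_vertices V"
    and "isom_subgroup G"
    and "acts_on_map G V E c"
    and "quasi_transitive G V"
  shows "finitely_generated G"
proof -
  note G = assms(5)
  have sg: "simple_graph V E" and gc: "graph_connected V E" and inf: "infinite V" and Vd: "V \<subseteq> hdisc"
    using assms(1) unfolding is_hyp_map_def by auto
  have GV: "\<And>g. g \<in> G \<Longrightarrow> g ` V = V" using assms(6) unfolding acts_on_map_def by blast
  have GE: "\<And>g u v. g \<in> G \<Longrightarrow> u \<in> V \<Longrightarrow> v \<in> V \<Longrightarrow> E u v \<longleftrightarrow> E (g u) (g v)"
    using assms(6) unfolding acts_on_map_def by blast
  have EV: "\<And>u v. E u v \<Longrightarrow> u \<in> V \<and> v \<in> V" using sg unfolding simple_graph_def by blast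
  have idG: "id \<in> G" using G unfolding isom_subgroup_def by blast
  define orb where "orb = (\<lambda>v. (\<lambda>g. g v) ` G)"
  define Orbs where "Orbs = orb ` V"
  have fO: "finite Orbs" using assms(7) unfolding quasi_transitive_def Orbs_def orb_def by simp
  define rep where "rep = (\<lambda>ob. SOME v. v \<in> V \<and> orb v = ob)"
  define R where "R = rep ` Orbs"
  have fR: "finite R" using fO by (simp add: R_def)
  have rep: "rep (orb u) \<in> V \<and> orb (rep (orb u)) = orb u" if "u \<in> V" for u
    unfolding rep_def by (rule someI[of _ u]) (use that in simp)
  have RV: "R \<subseteq> V" using rep by (auto simp: R_def Orbs_def)
  have reprs: "\<exists>r\<in>R. \<exists>g\<in>G. g r = u" if u: "u \<in> V" for u
  proof -
    let ?r = "rep (orb u)"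
    have "?r \<in> R" using u by (simp add: R_def Orbs_def)
    moreover have "u \<in> orb ?r" using rep[OF u] idG by (simp add: orb_def) (metis id_apply image_eqI)
    ultimately show ?thesis unfolding orb_def by (metis imageE)
  qed
  obtain r0 where r0: "r0 \<in> V" using inf by (metis ex_in_conv finite.emptyI)
  obtain r1 where r1: "r1 \<in> R" using reprs[OF r0] by blast
  define N where "N = R \<union> (\<Union>r\<in>R. {u. E r u})"
  have fN: "finite N" unfolding N_def using fR RV assms(2) unfolding locally_finite_graph_def by auto
  have NV: "N \<subseteq> V" unfolding N_def using RV EV by auto
  define S where "S = {g \<in> G. \<exists>r\<in>R. \<exists>r'\<in>R. g r' = r \<or> E r (g r')}"
  have SG: "S \<subseteq> G" by (auto simp: S_def)
  have "S \<subseteq> (\<Union>r'\<in>R. \<Union>w\<in>N. {g \<in> G. g r' = w})" by (auto simp: S_def N_def)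
  moreover have "finite (\<Union>r'\<in>R. \<Union>w\<in>N. {g \<in> G. g r' = w})"
    using fR fN RV NV fib_finite[OF G GV Vd inf assms(4)] by (intro finite_UN_I) auto
  ultimately have fS: "finite S" using finite_subset by blast
  have main: "\<forall>h\<in>G. \<forall>r\<in>R. h r = u \<longrightarrow> h \<in> isom_generated S" if "u \<in> reach E r1" for u
    using that
  proof (induction u rule: reach.induct)
    case r_base
    show ?case
    proof (intro ballI impI)
      fix h r assume "h \<in> G" "r \<in> R" "h r = r1"
      then have "h \<in> S" using r1 by (auto simp: S_def)
      then show "h \<in> isom_generated S" by (rule gen_S)
    qed
  next
    case (r_step u u')
    show ?case
    proof (intro ballI impI)
      fix h r assume h: "h \<in> G" and r: "r \<in> R" and hr: "h r = u'"
      have uV: "u \<in> V" "u' \<in> V" using EV r_step.hyps(2) by auto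
      obtain r' h' where r': "r' \<in> R" and h': "h' \<in> G" and hr': "h' r' = u" using reprs[OF uV(1)] by blast
      have h'S: "h' \<in> isom_generated S" using r_step.IH r' h' hr' by blast
      have hi: "hyp_isom h'" using h' G sub_isom by blast
      define s where "s = isom_inv h' \<circ> h"
      have sG: "s \<in> G" unfolding s_def using h h' by (intro sub_comp[OF G] sub_inv[OF G])
      have "E (isom_inv h' u) (isom_inv h' u')" using GE[OF sub_inv[OF G h'] uV] r_step.hyps(2) by simp
      moreover have "isom_inv h' u = r'" using hr' isom_inv_app[OF hi, of r'] by simp
      ultimately have "E r' (s r)" using hr by (simp add: s_def)
      then have "s \<in> S" using sG r r' by (auto simp: S_def)
      then have "h' \<circ> s \<in> isom_generated S" using gen_comp h'S gen_S by blast
      moreover have "h' \<circ> s = h" unfolding s_def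
        by (simp add: comp_assoc[symmetric] isom_inv_right[OF hi])
      ultimately show "h \<in> isom_generated S" by simp
    qed
  qed
  have "G \<subseteq> isom_generated S"
  proof
    fix g assume g: "g \<in> G"
    have "g r1 \<in> V" using GV[OF g] r1 RV by blast
    then obtain p where p: "p \<noteq> []" "hd p = r1" "last p = g r1"
        "\<forall>i. Suc i < length p \<longrightarrow> E (p ! i) (p ! Suc i)"
      using gc r1 RV unfolding graph_connected_def conn_in_def by blast
    have "g r1 \<in> reach E r1" using walk_reach[OF p(1,2,4)] p(3) by simp
    then show "g \<in> isom_generated S" using main g r1 by blast
  qed
  then have "isom_generated S = G" using gen_sub[OF G SG] by blast
  then show ?thesis unfolding finitely_generated_def using fS SG by blast
qed

end
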